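(* Let $(\Lambda,d)$ be a finitely aligned $k$-graph and give $X_\Lambda$ the topology generated by the subbasis $\{D_F,X_\Lambda\setminus D_F:F\in S_\Lambda\}$. Then the set $\partial\Lambda$ of boundary paths is closed in $X_\Lambda$.
   Context: A $k$-graph $(\Lambda,d)$ is a countable small category $\Lambda$ (objects identified with identity morphisms) with a functor $d:\Lambda\to\mathbb N^k$ satisfying unique factorization: whenever $d(\lambda)=m+n$ there are unique $\mu,\nu$ with $d(\mu)=m$, $d(\nu)=n$, $\lambda=\mu\nu$. $\Lambda^0=d^{-1}(0)$, $r,s$ range/source, $v\Lambda=r^{-1}(v)$. $\Lambda^{\min}(\lambda,\mu)=\{(\alpha,\beta):\lambda\alpha=\mu\beta,\ d(\lambda\alpha)=d(\lambda)\vee d(\mu)\}$; finitely aligned means all are finite. $E\subseteq v\Lambda$ is exhaustive if every $\mu\in v\Lambda$ has some $\lambda\in E$ with $\Lambda^{\min}(\lambda,\mu)\ne\emptyset$; $v\mathrm{FE}(\Lambda)$ = finite exhaustive subsets of $v\Lambda$. $S_\Lambda$ is the set of finite $F\subseteq\{(\lambda,\mu):s(\lambda)=s(\mu)\}$ such that distinct $(\lambda,\mu),(\nu,\omega)\in F$ satisfy $\Lambda^{\min}(\lambda,\nu)=\Lambda^{\min}(\mu,\omega)=\emptyset$. $\Omega_{k,m}$ ($m\in(\mathbb N\cup\{\infty\})^k$): objects $\{p\in\mathbb N^k:p\le m\}$, morphisms $(p,q)$ with $p\le q\le m$, $r(p,q)=p$, $s(p,q)=q$, $d(p,q)=q-p$.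 $X_\Lambda$ = all degree-preserving functors $x:\Omega_{k,m}\to\Lambda$; $d(x)=m$, $x(n)=x(n,n)$. $D_F=\{x:\exists(\lambda,\mu)\in F,\ d(\mu)\le d(x),\ x(0,d(\mu))=\mu\}$. $x\in X_\Lambda$ is a boundary path if for all $n\in\mathbb N^k$ with $n\le d(x)$ and all $E\in x(n)\mathrm{FE}(\Lambda)$ there is $\lambda\in E$ with $x(n,n+d(\lambda))=\lambda$; $\partial\Lambda$ is the set of boundary paths. *)

theory Defs
  imports "HOL-Analysis.Analysis" "HOL-Library.Extended_Nat"
begin

text \<open>A k-graph, with k the cardinality of the finite index type 'k.
  Degrees live in 'k \<Rightarrow> nat (the monoid N^k, pointwise order, pointwise sup = join).
  Objects are identified with identity morphisms.\<close>

record ('a, 'k) kgraph =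
  Mor :: "'a set"
  rng :: "'a \<Rightarrow> 'a"
  src :: "'a \<Rightarrow> 'a"
  cmp :: "'a \<Rightarrow> 'a \<Rightarrow> 'a"
  deg :: "'a \<Rightarrow> ('k \<Rightarrow> nat)"

definition is_kgraph :: "('a, 'k::finite) kgraph \<Rightarrow> bool" where
  "is_kgraph L \<longleftrightarrow>
     countable (Mor L)
   \<comment> \<open>small category\<close>
   \<and> (\<forall>l\<in>Mor L. rng L l \<in> Mor L \<and> src L l \<in> Mor L)
   \<and> (\<forall>l\<in>Mor L. rng L (rng L l) = rng L l \<and> src L (rng L l) = rng L l
                 \<and> rng L (src L l) = src L l \<and> src L (src L l) = src L l)
   \<and> (\<forall>l\<in>Mor L. \<forall>m\<in>Mor L. src L l = rng L m \<longrightarrow>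
          cmp L l m \<in> Mor L \<and> rng L (cmp L l m) = rng L l \<and> src L (cmp L l m) = src L m)
   \<and> (\<forall>l\<in>Mor L. cmp L (rng L l) l = l \<and> cmp L l (src L l) = l)
   \<and> (\<forall>l\<in>Mor L. \<forall>m\<in>Mor L. \<forall>n\<in>Mor L. src L l = rng L m \<longrightarrow> src L m = rng L n \<longrightarrow>
          cmp L (cmp L l m) n = cmp L l (cmp L m n))
   \<comment> \<open>d is a functor to N^k\<close>
   \<and> (\<forall>l\<in>Mor L. deg L (rng L l) = (\<lambda>_. 0))
   \<and> (\<forall>l\<in>Mor L. \<forall>m\<in>Mor L. src L l = rng L m \<longrightarrow>
          deg L (cmp L l m) = (\<lambda>i. deg L l i + deg L m i))
   \<comment> \<open>unique factorisation\<close>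
   \<and> (\<forall>l\<in>Mor L. \<forall>p q. deg L l = (\<lambda>i. p i + q i) \<longrightarrow>
          (\<exists>!(m, n). m \<in> Mor L \<and> n \<in> Mor L \<and> src L m = rng L n
                   \<and> deg L m = p \<and> deg L n = q \<and> l = cmp L m n))"

definition Lmin :: "('a, 'k::finite) kgraph \<Rightarrow> 'a \<Rightarrow> 'a \<Rightarrow> ('a \<times> 'a) set" where
  "Lmin L l m = {(a, b). a \<in> Mor L \<and> b \<in> Mor L \<and> src L l = rng L a \<and> src L m = rng L b
      \<and> cmp L l a = cmp L m b \<and> deg L (cmp L l a) = sup (deg L l) (deg L m)}"

definition finitely_aligned :: "('a, 'k::finite) kgraph \<Rightarrow> bool" where
  "finitely_aligned L \<longleftrightarrow> (\<forall>l\<in>Mor L. \<forall>m\<in>Mor L. finite (Lmin L l m))"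

definition vL :: "('a, 'k::finite) kgraph \<Rightarrow> 'a \<Rightarrow> 'a set" where
  "vL L v = {l \<in> Mor L. rng L l = v}"

definition exhaustive :: "('a, 'k::finite) kgraph \<Rightarrow> 'a \<Rightarrow> 'a set \<Rightarrow> bool" where
  "exhaustive L v E \<longleftrightarrow> E \<subseteq> vL L v \<and> (\<forall>m\<in>vL L v. \<exists>l\<in>E. Lmin L l m \<noteq> {})"

definition FE :: "('a, 'k::finite) kgraph \<Rightarrow> 'a \<Rightarrow> 'a set set" where
  "FE L v = {E. finite E \<and> exhaustive L v E}"

definition S_L :: "('a, 'k::finite) kgraph \<Rightarrow> ('a \<times> 'a) set set" where
  "S_L L = {F. finite F \<and> F \<subseteq> {(l, m). l \<in> Mor L \<and> m \<in> Mor L \<and> src L l = src L m}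
     \<and> (\<forall>(l, m)\<in>F. \<forall>(n, w)\<in>F. (l, m) \<noteq> (n, w) \<longrightarrow> Lmin L l n = {} \<and> Lmin L m w = {})}"

text \<open>Paths: a pair (m, x) with m \<in> (N \<union> {\<infinity>})^k and x the (extensional) morphism map of a
  degree-preserving functor \<Omega>_{k,m} \<rightarrow> \<Lambda>; the morphism (p,q) of \<Omega>_{k,m} is sent to x p q.\<close>

definition le_en :: "('k \<Rightarrow> nat) \<Rightarrow> ('k \<Rightarrow> enat) \<Rightarrow> bool" where
  "le_en q m \<longleftrightarrow> (\<forall>i. enat (q i) \<le> m i)"

definition in_Omega :: "('k \<Rightarrow> enat) \<Rightarrow> ('k \<Rightarrow> nat) \<Rightarrow> ('k \<Rightarrow> nat) \<Rightarrow> bool" where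
  "in_Omega m p q \<longleftrightarrow> p \<le> q \<and> le_en q m"

type_synonym ('a, 'k) path = "('k \<Rightarrow> enat) \<times> (('k \<Rightarrow> nat) \<Rightarrow> ('k \<Rightarrow> nat) \<Rightarrow> 'a)"

definition is_path :: "('a, 'k::finite) kgraph \<Rightarrow> ('a, 'k) path \<Rightarrow> bool" where
  "is_path L x \<longleftrightarrow> (case x of (m, f) \<Rightarrow>
      (\<forall>p q. in_Omega m p q \<longrightarrow> f p q \<in> Mor L \<and> deg L (f p q) = (\<lambda>i. q i - p i)
                                 \<and> rng L (f p q) = f p p \<and> src L (f p q) = f q q)
    \<and> (\<forall>p q t. in_Omega m p q \<longrightarrow> in_Omega m q t \<longrightarrow> f p t = cmp L (f p q) (f q t))
    \<and> (\<forall>p q. \<not> in_Omega m p q \<longrightarrow> f p q = undefined))"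

definition X_L :: "('a, 'k::finite) kgraph \<Rightarrow> ('a, 'k) path set" where
  "X_L L = {x. is_path L x}"

definition D_F :: "('a, 'k::finite) kgraph \<Rightarrow> ('a \<times> 'a) set \<Rightarrow> ('a, 'k) path set" where
  "D_F L F = {x \<in> X_L L. \<exists>(l, m)\<in>F. le_en (deg L m) (fst x) \<and> snd x (\<lambda>_. 0) (deg L m) = m}"

definition boundary_paths :: "('a, 'k::finite) kgraph \<Rightarrow> ('a, 'k) path set" where
  "boundary_paths L = {x \<in> X_L L.
     \<forall>n. le_en n (fst x) \<longrightarrow> (\<forall>E\<in>FE L (snd x n n).
        \<exists>l\<in>E. le_en (\<lambda>i. n i + deg L l i) (fst x) \<and> snd x n (\<lambda>i. n i + deg L l i) = l)}"

definition path_topology :: "('a, 'k::finite) kgraph \<Rightarrow> ('a, 'k) path topology" where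
  "path_topology L = topology_generated_by
     ((\<lambda>F. D_F L F) ` S_L L \<union> (\<lambda>F. X_L L - D_F L F) ` S_L L)"

end

theory Submission
  imports Defs
begin

lemma path_facts:
  assumes "is_path L (m, f)" "in_Omega m p q"
  shows "f p q \<in> Mor L \<and> deg L (f p q) = (\<lambda>i. q i - p i)
          \<and> rng L (f p q) = f p p \<and> src L (f p q) = f q q"
  using assms unfolding is_path_def by auto

lemma path_comp:
  assumes "is_path L (m, f)" "in_Omega m p q" "in_Omega m q t"
  shows "f p t = cmp L (f p q) (f q t)"
  using assms unfolding is_path_def by auto

lemma omega0: "le_en n m \<Longrightarrow> in_Omega m (\<lambda>_. 0) n"
  unfolding in_Omega_def by (auto simp: le_fun_def)

lemma omega1: "le_en (\<lambda>i. n i + d i) m \<Longrightarrow> in_Omega m n (\<lambda>i. n i + d i)"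
  unfolding in_Omega_def by (auto simp: le_fun_def)

theorem lemma5p12:
  fixes L :: "('a, 'k::finite) kgraph"
  assumes "is_kgraph L" and "finitely_aligned L"
  shows "closedin (path_topology L) (boundary_paths L)"
proof -
  let ?S = "(\<lambda>F. D_F L F) ` S_L L \<union> (\<lambda>F. X_L L - D_F L F) ` S_L L"
  have emp: "{} \<in> S_L L" unfolding S_L_def by auto
  have DFsub: "D_F L F \<subseteq> X_L L" for F unfolding D_F_def by auto
  have top: "topspace (path_topology L) = X_L L"
  proof -
    have "D_F L {} = {}" unfolding D_F_def by auto
    hence "X_L L \<in> ?S" using emp by force
    moreover have "\<Union>?S \<subseteq> X_L L" using DFsub by auto
    ultimately show ?thesis unfolding path_topology_def by auto
  qed
  have opb: "openin (path_topology L) s" if "s \<in> ?S" for s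
    unfolding path_topology_def using that by (rule topology_generated_by_Basis)
  have sing: "{(l, l)} \<in> S_L L" if "l \<in> Mor L" for l
    unfolding S_L_def using that by auto
  have uf: "\<And>l p q. l \<in> Mor L \<Longrightarrow> deg L l = (\<lambda>i. p i + q i) \<Longrightarrow>
          (\<exists>!(m, n). m \<in> Mor L \<and> n \<in> Mor L \<and> src L m = rng L n
                   \<and> deg L m = p \<and> deg L n = q \<and> l = cmp L m n)"
    using assms(1) unfolding is_kgraph_def by blast
  have cmpmor0: "\<forall>l\<in>Mor L. \<forall>m\<in>Mor L. src L l = rng L m \<longrightarrow>
          cmp L l m \<in> Mor L \<and> rng L (cmp L l m) = rng L l \<and> src L (cmp L l m) = src L m"
    using assms(1) unfolding is_kgraph_def by (elim conjE) assumption
  have degcmp0: "\<forall>l\<in>Mor L. \<forall>m\<in>Mor L. src L l = rng L m \<longrightarrow>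
          deg L (cmp L l m) = (\<lambda>i. deg L l i + deg L m i)"
    using assms(1) unfolding is_kgraph_def by (elim conjE) assumption
  have cmpmor: "\<And>l m. l \<in> Mor L \<Longrightarrow> m \<in> Mor L \<Longrightarrow> src L l = rng L m \<Longrightarrow>
          cmp L l m \<in> Mor L \<and> rng L (cmp L l m) = rng L l \<and> src L (cmp L l m) = src L m"
    using cmpmor0 by blast
  have degcmp: "\<And>l m. l \<in> Mor L \<Longrightarrow> m \<in> Mor L \<Longrightarrow> src L l = rng L m \<Longrightarrow>
          deg L (cmp L l m) = (\<lambda>i. deg L l i + deg L m i)"
    using degcmp0 by blast
  have "openin (path_topology L) (X_L L - boundary_paths L)"
  proof (subst openin_subopen, intro ballI)
    fix x assume xin: "x \<in> X_L L - boundary_paths L"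
    obtain m f where xe: "x = (m, f)" by (cases x)
    have px: "is_path L (m, f)" using xin xe unfolding X_L_def by auto
    obtain n E where nm: "le_en n m" and EF: "E \<in> FE L (f n n)" and
      nl: "\<forall>l\<in>E. \<not> (le_en (\<lambda>i. n i + deg L l i) m \<and> f n (\<lambda>i. n i + deg L l i) = l)"
      using xin xe unfolding boundary_paths_def X_L_def by auto
    have fE: "finite E" and Esub: "E \<subseteq> vL L (f n n)"
      using EF unfolding FE_def exhaustive_def by auto
    define mu where "mu = f (\<lambda>_. 0) n"
    have mufacts: "mu \<in> Mor L \<and> deg L mu = n \<and> src L mu = f n n"
      using path_facts[OF px omega0[OF nm]] unfolding mu_def by auto
    define G where "G = {(mu, mu)}"
    define T where "T = D_F L G \<inter> ((\<Inter>l\<in>E. X_L L - D_F L {(cmp L mu l, cmp L mu l)}) \<inter> topspace (path_topology L))"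
    have lE: "l \<in> Mor L \<and> rng L l = f n n" if "l \<in> E" for l
      using Esub that unfolding vL_def by auto
    have cm: "cmp L mu l \<in> Mor L \<and> deg L (cmp L mu l) = (\<lambda>i. n i + deg L l i)" if "l \<in> E" for l
      using cmpmor degcmp mufacts lE[OF that] by auto
    have "openin (path_topology L) T"
      unfolding T_def
    proof (rule openin_Int)
      show "openin (path_topology L) (D_F L G)"
      proof (rule opb)
        show "D_F L G \<in> ?S" using sing[of mu] mufacts unfolding G_def by blast
      qed
      show "openin (path_topology L)
         ((\<Inter>l\<in>E. X_L L - D_F L {(cmp L mu l, cmp L mu l)}) \<inter> topspace (path_topology L))"
      proof (rule openin_INT[OF fE])
        fix l assume lin: "l \<in> E"
        have "X_L L - D_F L {(cmp L mu l, cmp L mu l)} \<in> ?S"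
          using sing[of "cmp L mu l"] cm[OF lin] by blast
        thus "openin (path_topology L) (X_L L - D_F L {(cmp L mu l, cmp L mu l)})" by (rule opb)
      qed
    qed
    moreover have "x \<in> T"
    proof -
      have "x \<in> D_F L G" using xin xe mufacts nm unfolding D_F_def G_def mu_def by auto
      moreover have "x \<notin> D_F L {(cmp L mu l, cmp L mu l)}" if lin: "l \<in> E" for l
      proof
        assume "x \<in> D_F L {(cmp L mu l, cmp L mu l)}"
        hence le: "le_en (\<lambda>i. n i + deg L l i) m"
          and eq: "f (\<lambda>_. 0) (\<lambda>i. n i + deg L l i) = cmp L mu l"
          using cm[OF lin] xe unfolding D_F_def by auto
        let ?y = "f n (\<lambda>i. n i + deg L l i)"
        have yf: "?y \<in> Mor L \<and> deg L ?y = deg L l \<and> rng L ?y = f n n"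
          using path_facts[OF px omega1[OF le]] by auto
        have c2: "f (\<lambda>_. 0) (\<lambda>i. n i + deg L l i) = cmp L mu ?y"
          unfolding mu_def using path_comp[OF px omega0[OF nm] omega1[OF le]] .
        define Q where "Q = (\<lambda>(a, b). a \<in> Mor L \<and> b \<in> Mor L \<and> src L a = rng L b
                   \<and> deg L a = n \<and> deg L b = deg L l \<and> cmp L mu l = cmp L a b)"
        have U: "\<exists>!z. Q z" unfolding Q_def using uf[of "cmp L mu l" n "deg L l"] cm[OF lin] by blast
        have Q1: "Q (mu, ?y)" unfolding Q_def using mufacts yf eq c2 by simp
        have Q2: "Q (mu, l)" unfolding Q_def using mufacts lE[OF lin] by simp
        have "(mu, ?y) = (mu, l)" using U Q1 Q2 by (metis ex1E)
        hence "?y = l" by simp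
        thus False using nl lin le by auto
      qed
      ultimately show ?thesis unfolding T_def using xin top by auto
    qed
    moreover have "T \<subseteq> X_L L - boundary_paths L"
    proof
      fix y assume yT: "y \<in> T"
      obtain m' g where ye: "y = (m', g)" by (cases y)
      have py: "is_path L (m', g)" using yT ye top unfolding T_def X_L_def by auto
      have yD: "y \<in> D_F L G" using yT unfolding T_def by auto
      hence nm': "le_en n m'" and g0: "g (\<lambda>_. 0) n = mu"
        using ye mufacts unfolding D_F_def G_def by auto
      have gnn: "g n n = f n n"
        using path_facts[OF py omega0[OF nm']] g0 mufacts by auto
      have "y \<notin> boundary_paths L"
      proof
        assume "y \<in> boundary_paths L"
        hence B: "\<forall>E\<in>FE L (g n n). \<exists>l\<in>E. le_en (\<lambda>i. n i + deg L l i) m'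
              \<and> g n (\<lambda>i. n i + deg L l i) = l"
          using nm' ye unfolding boundary_paths_def by auto
        have "\<exists>l\<in>E. le_en (\<lambda>i. n i + deg L l i) m' \<and> g n (\<lambda>i. n i + deg L l i) = l"
          using B EF gnn by simp
        then obtain l where lin: "l \<in> E" and le: "le_en (\<lambda>i. n i + deg L l i) m'"
          and gl: "g n (\<lambda>i. n i + deg L l i) = l" by blast
        have "g (\<lambda>_. 0) (\<lambda>i. n i + deg L l i) = cmp L mu l"
          using path_comp[OF py omega0[OF nm'] omega1[OF le]] g0 gl by simp
        hence "y \<in> D_F L {(cmp L mu l, cmp L mu l)}"
          using cm[OF lin] le py ye unfolding D_F_def X_L_def by auto
        moreover have "y \<in> (\<Inter>l\<in>E. X_L L - D_F L {(cmp L mu l, cmp L mu l)})"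
          using yT unfolding T_def by blast
        ultimately show False using lin by blast
      qed
      thus "y \<in> X_L L - boundary_paths L" using py ye unfolding X_L_def by auto
    qed
    ultimately show "\<exists>T. openin (path_topology L) T \<and> x \<in> T \<and> T \<subseteq> X_L L - boundary_paths L"
      by blast
  qed
  moreover have "boundary_paths L \<subseteq> X_L L" unfolding boundary_paths_def by auto
  ultimately show ?thesis unfolding closedin_def top by auto
qed

end
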